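(* Let $G$ be a connected graph whose vertex set is partitioned into three stable sets $X$, $Y$, $Z$ such that every vertex of $Y$ is adjacent to every vertex of $Z$, and suppose that every vertex of $X$ has at least one neighbour in $Y$ and at least one neighbour in $Z$. Then $G$ has the de Bruijn-Erd\H{o}s property: the metric space $(V(G), d_G)$ has a universal line or at least $|V(G)|$ distinct lines.
   Context: $d_G$ is the shortest-path distance of $G$. In a metric space $(V,\rho)$, an element $b$ is between $a$ and $c$ if $\rho(a,b)+\rho(b,c)=\rho(a,c)$; three elements are collinear if one of them is between the other two. For distinct $a,b\in V$, the line generated by $a$ and $b$ is the set consisting of $a$, $b$, and all elements $c$ such that $a,b,c$ are collinear. A line is universal if it equals the whole ground set $V$. *)

theory Defs
  imports Main
begin

text \<open>A finite simple graph is given by a finite vertex set V and a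
symmetric, irreflexive adjacency relation E (only its restriction to V matters).\<close>

definition simple_graph :: "'a set \<Rightarrow> ('a \<Rightarrow> 'a \<Rightarrow> bool) \<Rightarrow> bool" where
  "simple_graph V E \<longleftrightarrow> finite V \<and> (\<forall>u\<in>V. \<forall>v\<in>V. E u v \<longrightarrow> E v u) \<and> (\<forall>v\<in>V. \<not> E v v)"

text \<open>A walk in (V,E) from u to v: a nonempty vertex list in V whose consecutive
entries are adjacent; its length is the number of edges, length xs - 1.\<close>

definition is_walk :: "'a set \<Rightarrow> ('a \<Rightarrow> 'a \<Rightarrow> bool) \<Rightarrow> 'a list \<Rightarrow> 'a \<Rightarrow> 'a \<Rightarrow> bool" where
  "is_walk V E xs u v \<longleftrightarrow> xs \<noteq> [] \<and> set xs \<subseteq> V \<and> hd xs = u \<and> last xs = v \<and>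
     (\<forall>i. Suc i < length xs \<longrightarrow> E (xs ! i) (xs ! Suc i))"

definition connected_graph :: "'a set \<Rightarrow> ('a \<Rightarrow> 'a \<Rightarrow> bool) \<Rightarrow> bool" where
  "connected_graph V E \<longleftrightarrow> V \<noteq> {} \<and> (\<forall>u\<in>V. \<forall>v\<in>V. \<exists>xs. is_walk V E xs u v)"

definition gdist :: "'a set \<Rightarrow> ('a \<Rightarrow> 'a \<Rightarrow> bool) \<Rightarrow> 'a \<Rightarrow> 'a \<Rightarrow> nat" where
  "gdist V E u v = (LEAST n. \<exists>xs. is_walk V E xs u v \<and> length xs = Suc n)"

definition stable_set :: "('a \<Rightarrow> 'a \<Rightarrow> bool) \<Rightarrow> 'a set \<Rightarrow> bool" where
  "stable_set E S \<longleftrightarrow> (\<forall>u\<in>S. \<forall>v\<in>S. \<not> E u v)"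

definition between :: "('a \<Rightarrow> 'a \<Rightarrow> nat) \<Rightarrow> 'a \<Rightarrow> 'a \<Rightarrow> 'a \<Rightarrow> bool" where
  "between d a b c \<longleftrightarrow> d a b + d b c = d a c"

definition collinear3 :: "('a \<Rightarrow> 'a \<Rightarrow> nat) \<Rightarrow> 'a \<Rightarrow> 'a \<Rightarrow> 'a \<Rightarrow> bool" where
  "collinear3 d a b c \<longleftrightarrow> between d b a c \<or> between d a b c \<or> between d a c b"

definition line :: "'a set \<Rightarrow> ('a \<Rightarrow> 'a \<Rightarrow> nat) \<Rightarrow> 'a \<Rightarrow> 'a \<Rightarrow> 'a set" where
  "line V d a b = {a, b} \<union> {c \<in> V. collinear3 d a b c}"

definition lines :: "'a set \<Rightarrow> ('a \<Rightarrow> 'a \<Rightarrow> nat) \<Rightarrow> 'a set set" where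
  "lines V d = {line V d a b | a b. a \<in> V \<and> b \<in> V \<and> a \<noteq> b}"

definition has_universal_line :: "'a set \<Rightarrow> ('a \<Rightarrow> 'a \<Rightarrow> nat) \<Rightarrow> bool" where
  "has_universal_line V d \<longleftrightarrow> (\<exists>L\<in>lines V d. L = V)"

definition de_Bruijn_Erdos :: "'a set \<Rightarrow> ('a \<Rightarrow> 'a \<Rightarrow> nat) \<Rightarrow> bool" where
  "de_Bruijn_Erdos V d \<longleftrightarrow> has_universal_line V d \<or> card (lines V d) \<ge> card V"

end

theory Submission
  imports Defs
begin

definition cn :: "'a set \<Rightarrow> ('a \<Rightarrow> 'a \<Rightarrow> bool) \<Rightarrow> 'a \<Rightarrow> 'a \<Rightarrow> bool" where
  "cn V E u v \<longleftrightarrow> (\<exists>w\<in>V. E u w \<and> E w v)"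

definition dd :: "'a set \<Rightarrow> ('a \<Rightarrow> 'a \<Rightarrow> bool) \<Rightarrow> 'a \<Rightarrow> 'a \<Rightarrow> nat" where
  "dd V E u v = (if u = v then 0 else if E u v then 1 else if cn V E u v then 2 else 3)"

definition ln :: "'a set \<Rightarrow> ('a \<Rightarrow> 'a \<Rightarrow> bool) \<Rightarrow> 'a \<Rightarrow> 'a \<Rightarrow> 'a set" where
  "ln V E a b = line V (dd V E) a b"

lemma walk1: "is_walk V E xs u v \<Longrightarrow> length xs = Suc 0 \<Longrightarrow> u = v"
  unfolding is_walk_def by (cases xs) auto

lemma walk2: "is_walk V E xs u v \<Longrightarrow> length xs = Suc (Suc 0) \<Longrightarrow> E u v"
proof -
  assume w: "is_walk V E xs u v" and l: "length xs = Suc (Suc 0)"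
  then obtain a b where xs: "xs = [a,b]" by (auto simp: length_Suc_conv)
  have "E (xs!0) (xs!1)" using w l unfolding is_walk_def by auto
  moreover have "a = u" "b = v" using w unfolding is_walk_def xs by auto
  ultimately show ?thesis unfolding xs by auto
qed

lemma walk3: "is_walk V E xs u v \<Longrightarrow> length xs = Suc (Suc (Suc 0)) \<Longrightarrow> cn V E u v"
proof -
  assume w: "is_walk V E xs u v" and l: "length xs = Suc (Suc (Suc 0))"
  then obtain a b c where xs: "xs = [a,b,c]" by (auto simp: length_Suc_conv)
  have "E (xs!0) (xs!1)" "E (xs!1) (xs!2)" using w l unfolding is_walk_def
    by (auto simp del: nth_Cons_Suc) (metis One_nat_def lessI numeral_2_eq_2)
  moreover have "b \<in> V" "a = u" "c = v" using w unfolding is_walk_def xs by auto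
  ultimately show ?thesis unfolding cn_def xs by auto
qed

lemma gdist_le: "is_walk V E xs u v \<Longrightarrow> length xs = Suc n \<Longrightarrow> gdist V E u v \<le> n"
  unfolding gdist_def by (rule Least_le) blast

lemma gdist_ex: "is_walk V E xs u v \<Longrightarrow> \<exists>ys. is_walk V E ys u v \<and> length ys = Suc (gdist V E u v)"
  unfolding gdist_def
  apply (rule LeastI_ex)
  apply (rule exI[of _ "length xs - 1"])
  apply (rule exI[of _ xs])
  by (auto simp: is_walk_def)


locale bis =
  fixes V :: "'a set" and E :: "'a \<Rightarrow> 'a \<Rightarrow> bool" and X Y Z :: "'a set"
  assumes sg: "simple_graph V E"
    and XYZ: "X \<union> Y \<union> Z = V"
    and dXY: "X \<inter> Y = {}" and dXZ: "X \<inter> Z = {}" and dYZ: "Y \<inter> Z = {}"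
    and sX: "stable_set E X" and sY: "stable_set E Y" and sZ: "stable_set E Z"
    and YZ: "\<forall>y\<in>Y. \<forall>z\<in>Z. E y z"
    and Xnb: "\<forall>x\<in>X. (\<exists>y\<in>Y. E x y) \<and> (\<exists>z\<in>Z. E x z)"
    and Xne: "X \<noteq> {}"
begin

lemma Esym: "u \<in> V \<Longrightarrow> v \<in> V \<Longrightarrow> E u v \<Longrightarrow> E v u"
  using sg unfolding simple_graph_def by blast

lemma finV: "finite V" using sg unfolding simple_graph_def by blast

lemma inV: "X \<subseteq> V" "Y \<subseteq> V" "Z \<subseteq> V" using XYZ by auto

lemma swap: "bis V E X Z Y"
proof
  show "X \<union> Z \<union> Y = V" using XYZ by blast
  show "\<forall>y\<in>Z. \<forall>z\<in>Y. E y z" using YZ Esym inV by blast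
  show "\<forall>x\<in>X. (\<exists>y\<in>Z. E x y) \<and> (\<exists>z\<in>Y. E x z)" using Xnb by blast
qed (use sg dXY dXZ dYZ sX sY sZ Xne in auto)

lemma EYZ: "y \<in> Y \<Longrightarrow> z \<in> Z \<Longrightarrow> E y z" "y \<in> Y \<Longrightarrow> z \<in> Z \<Longrightarrow> E z y"
  using YZ Esym inV by blast+

lemma nE: "x \<in> X \<Longrightarrow> x' \<in> X \<Longrightarrow> \<not> E x x'"
     "y \<in> Y \<Longrightarrow> y' \<in> Y \<Longrightarrow> \<not> E y y'"
     "z \<in> Z \<Longrightarrow> z' \<in> Z \<Longrightarrow> \<not> E z z'"
  using sX sY sZ unfolding stable_set_def by blast+

lemma EXY: "x \<in> X \<Longrightarrow> y \<in> Y \<Longrightarrow> E y x = E x y"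
  using Esym inV by blast
lemma EXZ: "x \<in> X \<Longrightarrow> z \<in> Z \<Longrightarrow> E z x = E x z"
  using Esym inV by blast

lemma Yne: "Y \<noteq> {}" and Zne: "Z \<noteq> {}" using Xnb Xne by blast+

lemma dd_YY: "y \<in> Y \<Longrightarrow> y' \<in> Y \<Longrightarrow> dd V E y y' = (if y = y' then 0 else 2)"
proof -
  assume a: "y \<in> Y" "y' \<in> Y"
  obtain z where "z \<in> Z" using Zne by blast
  then have "cn V E y y'" unfolding cn_def using a EYZ inV by blast
  then show ?thesis unfolding dd_def using a nE by auto
qed

lemma dd_YZ: "y \<in> Y \<Longrightarrow> z \<in> Z \<Longrightarrow> dd V E y z = 1"
  "y \<in> Y \<Longrightarrow> z \<in> Z \<Longrightarrow> dd V E z y = 1"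
  unfolding dd_def using EYZ dYZ by auto

lemma dd_XY: "x \<in> X \<Longrightarrow> y \<in> Y \<Longrightarrow> dd V E x y = (if E x y then 1 else 2)"
  "x \<in> X \<Longrightarrow> y \<in> Y \<Longrightarrow> dd V E y x = (if E x y then 1 else 2)"
proof -
  assume a: "x \<in> X" "y \<in> Y"
  obtain z where z: "z \<in> Z" "E x z" using Xnb a by blast
  have c1: "cn V E x y" unfolding cn_def using a z EYZ inV by blast
  have c2: "cn V E y x" unfolding cn_def using a z EYZ EXZ inV by blast
  have ne: "x \<noteq> y" using a dXY by blast
  show "dd V E x y = (if E x y then 1 else 2)" unfolding dd_def using ne c1 by auto
  show "dd V E y x = (if E x y then 1 else 2)" unfolding dd_def using ne c2 EXY[OF a] by auto
qed

lemma cn_sym: "u \<in> V \<Longrightarrow> v \<in> V \<Longrightarrow> cn V E u v = cn V E v u"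
  unfolding cn_def using Esym by blast

lemma dd_XX: "x \<in> X \<Longrightarrow> x' \<in> X \<Longrightarrow> dd V E x x' = (if x = x' then 0 else if cn V E x x' then 2 else 3)"
  unfolding dd_def using nE by auto

lemma far_XX: "u \<in> V \<Longrightarrow> v \<in> V \<Longrightarrow> u \<noteq> v \<Longrightarrow> \<not> E u v \<Longrightarrow> \<not> cn V E u v \<Longrightarrow> u \<in> X \<and> v \<in> X"
proof -
  assume a: "u \<in> V" "v \<in> V" "u \<noteq> v" "\<not> E u v" "\<not> cn V E u v"
  show ?thesis
  proof (rule ccontr)
    assume "\<not> (u \<in> X \<and> v \<in> X)"
    then have "dd V E u v \<le> 2"
    proof -
      have "u \<in> X \<or> u \<in> Y \<or> u \<in> Z" "v \<in> X \<or> v \<in> Y \<or> v \<in> Z" using a XYZ by auto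
      then consider "u \<in> Y" "v \<in> Y" | "u \<in> Y" "v \<in> Z" | "u \<in> Y" "v \<in> X"
        | "u \<in> Z" "v \<in> Y" | "u \<in> Z" "v \<in> Z" | "u \<in> Z" "v \<in> X"
        | "u \<in> X" "v \<in> Y" | "u \<in> X" "v \<in> Z" using \<open>\<not> (u \<in> X \<and> v \<in> X)\<close> by blast
      then show ?thesis
      proof cases
        case 1 then show ?thesis by (simp add: dd_YY)
      next
        case 2 then show ?thesis by (simp add: dd_YZ)
      next
        case 3 then show ?thesis by (simp add: dd_XY)
      next
        case 4 then show ?thesis by (simp add: dd_YZ)
      next
        case 5 then show ?thesis by (simp add: bis.dd_YY[OF swap])
      next
        case 6 then show ?thesis by (simp add: bis.dd_XY[OF swap])
      next
        case 7 then show ?thesis by (simp add: dd_XY)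
      next
        case 8 then show ?thesis by (simp add: bis.dd_XY[OF swap])
      qed
    qed
    then show False using a unfolding dd_def by (auto split: if_splits)
  qed
qed

lemma gdist_dd: "u \<in> V \<Longrightarrow> v \<in> V \<Longrightarrow> gdist V E u v = dd V E u v"
proof -
  assume u: "u \<in> V" and v: "v \<in> V"
  have walk: "\<exists>xs. is_walk V E xs u v \<and> length xs = Suc (dd V E u v)"
  proof (cases "u = v")
    case True then show ?thesis using u by (auto simp: dd_def is_walk_def intro!: exI[of _ "[u]"])
  next
    case ne: False
    show ?thesis
    proof (cases "E u v")
      case True then show ?thesis using u v ne
        by (auto simp: dd_def is_walk_def less_Suc_eq intro!: exI[of _ "[u,v]"])
    next
      case nE: False
      show ?thesis
      proof (cases "cn V E u v")
        case True
        then obtain w where w: "w \<in> V" "E u w" "E w v" unfolding cn_def by blast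
        show ?thesis using u v ne nE True w
          by (auto simp: dd_def is_walk_def less_Suc_eq intro!: exI[of _ "[u,w,v]"])
      next
        case False
        then have uv: "u \<in> X" "v \<in> X" using far_XX u v ne nE by auto
        obtain z where z: "z \<in> Z" "E u z" using Xnb uv by blast
        obtain y where y: "y \<in> Y" "E v y" using Xnb uv by blast
        have "E z y" "E y v" using EYZ z y EXY uv by auto
        then show ?thesis using u v ne nE False z y inV
          by (auto simp: dd_def is_walk_def less_Suc_eq intro!: exI[of _ "[u,z,y,v]"])
      qed
    qed
  qed
  then obtain xs where xs: "is_walk V E xs u v" "length xs = Suc (dd V E u v)" by blast
  have le: "gdist V E u v \<le> dd V E u v" using gdist_le[OF xs] .
  obtain ys where ys: "is_walk V E ys u v" "length ys = Suc (gdist V E u v)"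
    using gdist_ex[OF xs(1)] by blast
  have ge: "dd V E u v \<le> gdist V E u v"
  proof (rule ccontr)
    assume "\<not> ?thesis"
    then have lt: "gdist V E u v < dd V E u v" by simp
    show False
    proof (cases "gdist V E u v")
      case 0 then show False using walk1[OF ys(1)] ys(2) lt unfolding dd_def by auto
    next
      case (Suc k)
      show False
      proof (cases k)
        case 0 then show False using walk2[OF ys(1)] ys(2) lt Suc unfolding dd_def by (auto split: if_splits)
      next
        case (Suc j)
        then have "j = 0" using lt \<open>gdist V E u v = Suc k\<close> unfolding dd_def by (auto split: if_splits)
        then show False using walk3[OF ys(1)] walk2[OF ys(1)] walk1[OF ys(1)] ys(2) lt Suc \<open>gdist V E u v = Suc k\<close>
          unfolding dd_def by (auto split: if_splits)
      qed
    qed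
  qed
  show ?thesis using le ge by simp
qed


lemma line_gd: "a \<in> V \<Longrightarrow> b \<in> V \<Longrightarrow> line V (gdist V E) a b = ln V E a b"
  unfolding ln_def line_def collinear3_def between_def by (auto simp: gdist_dd)

lemma lines_gd: "lines V (gdist V E) = lines V (dd V E)"
  unfolding lines_def using line_gd unfolding ln_def by (auto; metis)

lemma memV: "w \<in> ln V E a b \<longleftrightarrow> w = a \<or> w = b \<or> (w \<in> V \<and> collinear3 (dd V E) a b w)"
  unfolding ln_def line_def by auto

lemma cnI: "w \<in> V \<Longrightarrow> x' \<in> V \<Longrightarrow> E x w \<Longrightarrow> E x' w \<Longrightarrow> cn V E x x'"
  unfolding cn_def using Esym by blast

lemma parts: "w \<in> X \<or> w \<in> Y \<or> w \<in> Z \<or> w \<notin> V" using XYZ by auto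

lemmas dds = dd_YY dd_YZ dd_XY dd_XX bis.dd_YY[OF swap] bis.dd_XY[OF swap]

lemma mem_YY: assumes "y \<in> Y" "y' \<in> Y" "y \<noteq> y'"
  shows "w \<in> ln V E y y' \<longleftrightarrow> w = y \<or> w = y' \<or> w \<in> Z \<or> (w \<in> X \<and> E w y \<and> E w y')"
  using parts[of w] assms dXY dXZ dYZ inV
  by (elim disjE) (auto simp: memV collinear3_def between_def dds EXY EXZ split: if_splits)

lemma mem_YZ: assumes "y \<in> Y" "z \<in> Z"
  shows "w \<in> ln V E y z \<longleftrightarrow> w \<in> Y \<or> w \<in> Z \<or> (w \<in> X \<and> E w y \<noteq> E w z)"
  using parts[of w] assms dXY dXZ dYZ inV
  by (elim disjE) (auto simp: memV collinear3_def between_def dds EXY EXZ split: if_splits)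

lemma mem_XX: assumes "x \<in> X" "x' \<in> X" "x \<noteq> x'"
  shows "w \<in> ln V E x x' \<longleftrightarrow> w = x \<or> w = x' \<or> ((w \<in> Y \<or> w \<in> Z) \<and>
     (if cn V E x x' then E x w \<and> E x' w else E x w \<or> E x' w))"
  using parts[of w] assms dXY dXZ dYZ inV
  by (elim disjE; auto simp: memV collinear3_def between_def dds EXY EXZ split: if_splits;
      meson cnI subsetD inV)

lemma mem_XY1: assumes "x \<in> X" "y \<in> Y" "E x y"
  shows "w \<in> ln V E x y \<longleftrightarrow> w = x \<or> (w \<in> Y \<and> E x w) \<or> (w \<in> Z \<and> \<not> E x w) \<or> (w \<in> X \<and> (E w y \<or> \<not> cn V E x w))"
  using parts[of w] assms dXY dXZ dYZ inV
  by (elim disjE; auto simp: memV collinear3_def between_def dds EXY EXZ split: if_splits;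
      meson cnI subsetD inV)

lemma mem_XY2: assumes "x \<in> X" "y \<in> Y" "\<not> E x y"
  shows "w \<in> ln V E x y \<longleftrightarrow> w = x \<or> w = y \<or> (w \<in> Z \<and> E x w) \<or> (w \<in> X \<and> w \<noteq> x \<and> E w y \<and> \<not> cn V E x w)"
  using parts[of w] assms dXY dXZ dYZ inV
  by (elim disjE; auto simp: memV collinear3_def between_def dds EXY EXZ split: if_splits;
      meson cnI subsetD inV)

lemma dd_sym: "u \<in> V \<Longrightarrow> v \<in> V \<Longrightarrow> dd V E u v = dd V E v u"
  unfolding dd_def using Esym cn_sym by auto

lemma ln_sym: "a \<in> V \<Longrightarrow> b \<in> V \<Longrightarrow> ln V E a b = ln V E b a"
  unfolding ln_def line_def collinear3_def between_def by (auto simp: dd_sym)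


lemmas mems = mem_YY mem_YZ mem_XX mem_XY1 mem_XY2 bis.mem_YY[OF swap] bis.mem_YZ[OF swap]
  bis.mem_XY1[OF swap] bis.mem_XY2[OF swap]

lemma nz_lemma:
  assumes x0: "x0 \<in> X" and z1: "z1 \<in> Z" "E x0 z1" and y: "y \<in> Y" "\<not> E x0 y"
    and e1: "ln V E x0 y = ln V E x0 z1" and x': "x' \<in> X" "x' \<noteq> x0"
  shows "\<not> E x' z1"
proof
  assume a: "E x' z1"
  have "x' \<in> ln V E x0 z1" using a x0 z1 x' by (auto simp: mems)
  then have "x' \<in> ln V E x0 y" using e1 by simp
  then have "\<not> cn V E x0 x'" using x0 y x' dXY dXZ by (auto simp: mems)
  moreover have "cn V E x0 x'" using cnI[of z1 x' x0] z1 a x' inV by blast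
  ultimately show False by blast
qed

lemma ln_sub: "a \<in> V \<Longrightarrow> b \<in> V \<Longrightarrow> ln V E a b \<subseteq> V"
  unfolding ln_def line_def by auto

lemma U1:
  assumes x0: "x0 \<in> X" and y1: "y1 \<in> Y" "E x0 y1" and z1: "z1 \<in> Z" "E x0 z1"
    and y: "y \<in> Y" "\<not> E x0 y"
    and e1: "ln V E x0 y = ln V E x0 z1" and e2: "ln V E y1 z1 = ln V E y y1"
  shows "ln V E y z1 = V"
proof
  show "ln V E y z1 \<subseteq> V" using ln_sub y z1 inV by blast
  have yne: "y \<noteq> y1" using y y1 by blast
  have Ysub: "w = y \<or> w = y1" if w: "w \<in> Y" for w
  proof -
    have "w \<in> ln V E y1 z1" using w y1 z1 by (auto simp: mems)
    then have "w \<in> ln V E y y1" using e2 by simp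
    then show ?thesis using w y y1 yne dXY dYZ by (auto simp: mems)
  qed
  show "V \<subseteq> ln V E y z1"
  proof
    fix w assume w: "w \<in> V"
    consider "w \<in> Y" | "w \<in> Z" | "w = x0" | "w \<in> X" "w \<noteq> x0" using w XYZ by blast
    then show "w \<in> ln V E y z1"
    proof cases
      case 3 then show ?thesis using x0 y z1 dXY dXZ by (auto simp: mems)
    next
      case 4
      have nz: "\<not> E w z1" using nz_lemma[OF x0 z1 y e1] 4 by blast
      obtain y'' where y'': "y'' \<in> Y" "E w y''" using Xnb 4 by blast
      have "E w y"
      proof (cases "y'' = y")
        case True then show ?thesis using y'' by simp
      next
        case False
        then have "y'' = y1" using Ysub y'' by blast
        then have "w \<in> ln V E y1 z1" using 4 y1 z1 y'' nz dXY dXZ by (auto simp: mems)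
        then have "w \<in> ln V E y y1" using e2 by simp
        then show ?thesis using 4 y y1 yne dXY dXZ by (auto simp: mems)
      qed
      then show ?thesis using 4 nz y z1 dXY dXZ by (auto simp: mems)
    qed (use y z1 in \<open>simp_all add: mems\<close>)
  qed
qed

lemma U3:
  assumes x0: "x0 \<in> X" and y1: "y1 \<in> Y" "E x0 y1" and z1: "z1 \<in> Z" "E x0 z1"
    and y: "y \<in> Y" "\<not> E x0 y" and z: "z \<in> Z" "\<not> E x0 z"
    and e1: "ln V E x0 y = ln V E x0 z1" and e3: "ln V E x0 z = ln V E x0 y1"
    and e4: "ln V E y y1 = ln V E z z1"
  shows "ln V E y z1 = V"
proof
  show "ln V E y z1 \<subseteq> V" using ln_sub y z1 inV by blast
  have yne: "y \<noteq> y1" using y y1 by blast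
  have zne: "z \<noteq> z1" using z z1 by blast
  have Ysub: "w = y \<or> w = y1" if w: "w \<in> Y" for w
  proof -
    have "w \<in> ln V E z z1" using w z z1 zne by (auto simp: mems)
    then have "w \<in> ln V E y y1" using e4 by simp
    then show ?thesis using w y y1 yne dXY dYZ by (auto simp: mems)
  qed
  show "V \<subseteq> ln V E y z1"
  proof
    fix w assume w: "w \<in> V"
    consider "w \<in> Y" | "w \<in> Z" | "w = x0" | "w \<in> X" "w \<noteq> x0" using w XYZ by blast
    then show "w \<in> ln V E y z1"
    proof cases
      case 3 then show ?thesis using x0 y z1 dXY dXZ by (auto simp: mems)
    next
      case 4
      have nz: "\<not> E w z1" using nz_lemma[OF x0 z1 y e1] 4 by blast
      have ny: "\<not> E w y1" using bis.nz_lemma[OF swap x0 y1 z e3] 4 by blast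
      obtain y'' where y'': "y'' \<in> Y" "E w y''" using Xnb 4 by blast
      have "E w y" using Ysub[OF y''(1)] y'' ny by blast
      then show ?thesis using 4 nz y z1 dXY dXZ by (auto simp: mems)
    qed (use y z1 in \<open>simp_all add: mems\<close>)
  qed
qed

lemma lnI: "a \<in> V \<Longrightarrow> b \<in> V \<Longrightarrow> a \<noteq> b \<Longrightarrow> ln V E a b \<in> lines V (dd V E)"
  unfolding lines_def ln_def by blast

lemma fin_lines: "finite (lines V (dd V E))"
proof -
  have "lines V (dd V E) \<subseteq> Pow V" unfolding lines_def line_def by auto
  then show ?thesis using finV by (meson finite_Pow_iff finite_subset)
qed


lemma T1T6:
  assumes x0: "x0 \<in> X" and x': "x' \<in> X" "x' \<noteq> x0" and y1: "y1 \<in> Y" "E x0 y1"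
    and z1: "z1 \<in> Z" "E x0 z1"
  shows "ln V E x0 x' \<noteq> ln V E x0 y1"
proof
  assume eq: "ln V E x0 x' = ln V E x0 y1"
  obtain z' where z': "z' \<in> Z" "E x' z'" using Xnb x' by blast
  have h1: "z1 \<in> ln V E x0 x' \<longleftrightarrow> z1 \<in> ln V E x0 y1" using eq by simp
  have h2: "z' \<in> ln V E x0 x' \<longleftrightarrow> z' \<in> ln V E x0 y1" using eq by simp
  have ne: "x0 \<noteq> x'" "z1 \<noteq> x0" "z1 \<noteq> x'" "z' \<noteq> x0" "z' \<noteq> x'" "z1 \<notin> Y" "z' \<notin> Y" "z1 \<notin> X" "z' \<notin> X"
    using x0 x' z1 z' dXZ dYZ by blast+
  show False
  proof (cases "cn V E x0 x'")
    case True
    then show False using h2 x0 x' y1 z1 z' ne by (simp add: mems)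
  next
    case False
    then show False using h1 x0 x' y1 z1 z' ne by (simp add: mems)
  qed
qed

lemma T1T2:
  assumes x0: "x0 \<in> X" and x': "x' \<in> X" "x' \<noteq> x0" and y1: "y1 \<in> Y" "E x0 y1"
    and y: "y \<in> Y" "\<not> E x0 y"
  shows "ln V E x0 x' \<noteq> ln V E x0 y"
proof
  assume eq: "ln V E x0 x' = ln V E x0 y"
  have h1: "y1 \<in> ln V E x0 x' \<longleftrightarrow> y1 \<in> ln V E x0 y" using eq by simp
  have h2: "y \<in> ln V E x0 x' \<longleftrightarrow> y \<in> ln V E x0 y" using eq by simp
  have ne: "x0 \<noteq> x'" "y1 \<noteq> x0" "y1 \<noteq> x'" "y \<noteq> x0" "y \<noteq> x'" "y1 \<notin> Z" "y \<notin> Z" "y1 \<notin> X" "y \<notin> X" "y1 \<noteq> y"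
    using x0 x' y1 y dXY dYZ by blast+
  show False
  proof (cases "cn V E x0 x'")
    case True
    then show False using h2 x0 x' y1 y ne by (simp add: mems)
  next
    case False
    then show False using h1 x0 x' y1 y ne by (simp add: mems)
  qed
qed

lemma T1T4:
  assumes x0: "x0 \<in> X" and x': "x' \<in> X" "x' \<noteq> x0" and y1: "y1 \<in> Y" "E x0 y1"
    and y: "y \<in> Y" "E x0 y" "y \<noteq> y1" and zo: "zo \<in> Z" "\<not> E x0 zo"
  shows "ln V E x0 x' \<noteq> ln V E y y1"
proof
  assume eq: "ln V E x0 x' = ln V E y y1"
  obtain y' where y': "y' \<in> Y" "E x' y'" using Xnb x' by blast
  have h1: "zo \<in> ln V E x0 x' \<longleftrightarrow> zo \<in> ln V E y y1" using eq by simp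
  have h2: "y' \<in> ln V E x0 x' \<longleftrightarrow> y' \<in> ln V E y y1" using eq by simp
  have ne: "x0 \<noteq> x'" "zo \<noteq> x0" "zo \<noteq> x'" "y' \<noteq> x0" "y' \<noteq> x'" "zo \<notin> Y" "y' \<notin> Z" "zo \<notin> X" "y' \<notin> X"
    using x0 x' zo y' dXY dXZ dYZ by blast+
  show False
  proof (cases "cn V E x0 x'")
    case True
    then show False using h1 x0 x' y1 y zo ne by (simp add: mems)
  next
    case False
    have "\<not> E x0 y'" using False cnI[of y' x' x0] y' x' inV by blast
    then have "y' \<noteq> y" "y' \<noteq> y1" using y y1 by blast+
    then show False using h2 False x0 x' y1 y y' ne by (simp add: mems)
  qed
qed

lemma main1:
  assumes x0: "x0 \<in> X" and zo: "zo \<in> Z" "\<not> E x0 zo"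
    and nouni: "\<And>a b. a \<in> V \<Longrightarrow> b \<in> V \<Longrightarrow> a \<noteq> b \<Longrightarrow> ln V E a b \<noteq> V"
  shows "card V \<le> card (lines V (dd V E))"
proof -
  obtain y1 where y1: "y1 \<in> Y" "E x0 y1" using Xnb x0 by blast
  obtain z1 where z1: "z1 \<in> Z" "E x0 z1" using Xnb x0 by blast
  define ya where "ya v = (SOME y. y \<in> Y \<and> E v y)" for v
  define zb where "zb v = (SOME z. z \<in> Z \<and> E v z)" for v
  have yaP0: "ya v \<in> Y \<and> E v (ya v)" if "v \<in> X" for v
    unfolding ya_def using Xnb that by (metis (mono_tags, lifting) someI_ex)
  have zbP0: "zb v \<in> Z \<and> E v (zb v)" if "v \<in> X" for v
    unfolding zb_def using Xnb that by (metis (mono_tags, lifting) someI_ex)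
  have yaP: "ya v \<in> Y \<and> E v (ya v) \<and> ya v \<notin> X \<and> ya v \<notin> Z \<and> ya v \<noteq> v \<and> ya v \<noteq> x0" if "v \<in> X" for v
    using yaP0[OF that] that x0 dXY dYZ unfolding disjoint_iff by metis
  have zbP: "zb v \<in> Z \<and> E v (zb v) \<and> zb v \<notin> X \<and> zb v \<notin> Y \<and> zb v \<noteq> v \<and> zb v \<noteq> x0" if "v \<in> X" for v
    using zbP0[OF that] that x0 dXZ dYZ unfolding disjoint_iff by metis
  define f where "f v = (if v = x0 then ln V E y1 z1
      else if v \<in> X then ln V E x0 v
      else if v \<in> Y \<and> E x0 v \<and> v \<noteq> y1 then ln V E v y1
      else if v \<in> Z \<and> E x0 v \<and> v \<noteq> z1 then ln V E v zo
      else if v = y1 then ln V E x0 y1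
      else if v = z1 then ln V E x0 z1
      else if v \<in> Y then (if ln V E x0 v = ln V E x0 z1 then ln V E v y1 else ln V E x0 v)
      else (if ln V E x0 v = ln V E x0 y1 then ln V E v z1 else ln V E x0 v))" for v
  have nX: "\<And>v. v \<in> Y \<Longrightarrow> v \<notin> X" "\<And>v. v \<in> Z \<Longrightarrow> v \<notin> X" "\<And>v. v \<in> Z \<Longrightarrow> v \<notin> Y"
    using dXY dXZ dYZ by blast+
  have fT0: "f x0 = ln V E y1 z1" by (simp add: f_def)
  have fT1: "\<And>v. v \<in> X \<Longrightarrow> v \<noteq> x0 \<Longrightarrow> f v = ln V E x0 v" by (simp add: f_def)
  have fT4: "\<And>v. v \<in> Y \<Longrightarrow> E x0 v \<Longrightarrow> v \<noteq> y1 \<Longrightarrow> f v = ln V E v y1"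
    using x0 nX by (auto simp: f_def)
  have fT5: "\<And>v. v \<in> Z \<Longrightarrow> E x0 v \<Longrightarrow> v \<noteq> z1 \<Longrightarrow> f v = ln V E v zo"
    using x0 nX by (auto simp: f_def)
  have fT6: "f y1 = ln V E x0 y1" using x0 y1 nX by (auto simp: f_def)
  have fT7: "f z1 = ln V E x0 z1" using x0 z1 y1 nX by (auto simp: f_def)
  have fT2: "\<And>v. v \<in> Y \<Longrightarrow> \<not> E x0 v \<Longrightarrow> ln V E x0 v \<noteq> ln V E x0 z1 \<Longrightarrow> f v = ln V E x0 v"
    using x0 y1 z1 nX by (auto simp: f_def)
  have fT2p: "\<And>v. v \<in> Y \<Longrightarrow> \<not> E x0 v \<Longrightarrow> ln V E x0 v = ln V E x0 z1 \<Longrightarrow> f v = ln V E v y1"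
    using x0 y1 z1 nX by (auto simp: f_def)
  have fT3: "\<And>v. v \<in> Z \<Longrightarrow> \<not> E x0 v \<Longrightarrow> ln V E x0 v \<noteq> ln V E x0 y1 \<Longrightarrow> f v = ln V E x0 v"
    using x0 y1 z1 nX by (auto simp: f_def)
  have fT3p: "\<And>v. v \<in> Z \<Longrightarrow> \<not> E x0 v \<Longrightarrow> ln V E x0 v = ln V E x0 y1 \<Longrightarrow> f v = ln V E v z1"
    using x0 y1 z1 nX by (auto simp: f_def)
  have types: "w = x0 \<or> (w \<in> X \<and> w \<noteq> x0) \<or> (w \<in> Y \<and> E x0 w \<and> w \<noteq> y1) \<or> (w \<in> Z \<and> E x0 w \<and> w \<noteq> z1)
    \<or> w = y1 \<or> w = z1 \<or> (w \<in> Y \<and> \<not> E x0 w \<and> ln V E x0 w \<noteq> ln V E x0 z1)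
    \<or> (w \<in> Y \<and> \<not> E x0 w \<and> ln V E x0 w = ln V E x0 z1)
    \<or> (w \<in> Z \<and> \<not> E x0 w \<and> ln V E x0 w \<noteq> ln V E x0 y1)
    \<or> (w \<in> Z \<and> \<not> E x0 w \<and> ln V E x0 w = ln V E x0 y1)" if "w \<in> V" for w
    using that XYZ by blast
  have U1fact: "ln V E y1 z1 \<noteq> ln V E y y1" if "y \<in> Y" "\<not> E x0 y" "ln V E x0 y = ln V E x0 z1" for y
  proof
    assume "ln V E y1 z1 = ln V E y y1"
    then have "ln V E y z1 = V" using U1[OF x0 y1 z1] that by blast
    moreover have "y \<noteq> z1" using that z1 dYZ by blast
    ultimately show False using nouni[of y z1] that(1) z1(1) inV by blast
  qed
  have U2fact: "ln V E y1 z1 \<noteq> ln V E z z1" if "z \<in> Z" "\<not> E x0 z" "ln V E x0 z = ln V E x0 y1" for z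
  proof
    assume "ln V E y1 z1 = ln V E z z1"
    then have "ln V E z1 y1 = ln V E z z1" using ln_sym y1 z1 inV by blast
    then have "ln V E z y1 = V" using bis.U1[OF swap x0 z1 y1] that by blast
    moreover have "z \<noteq> y1" using that y1 dYZ by blast
    ultimately show False using nouni[of z y1] that(1) y1(1) inV by blast
  qed
  have U3fact: "ln V E y y1 \<noteq> ln V E z z1" if "y \<in> Y" "\<not> E x0 y" "ln V E x0 y = ln V E x0 z1"
    "z \<in> Z" "\<not> E x0 z" "ln V E x0 z = ln V E x0 y1" for y z
  proof
    assume "ln V E y y1 = ln V E z z1"
    then have "ln V E y z1 = V" using U3[OF x0 y1 z1] that by blast
    moreover have "y \<noteq> z1" using that z1 dYZ by blast
    ultimately show False using nouni[of y z1] that(1) z1(1) inV by blast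
  qed
  have neq: "\<And>v. E x0 v \<Longrightarrow> v \<noteq> zo" "\<And>v. \<not> E x0 v \<Longrightarrow> v \<noteq> y1"
    "\<And>v. \<not> E x0 v \<Longrightarrow> v \<noteq> z1" using zo y1 z1 by blast+
  note ctx = x0 zo y1 z1 dXY dXZ dYZ inV yaP zbP cnI nX neq
  have inj: "inj_on f V"
  proof (rule inj_onI, rule ccontr)
    fix u v assume u: "u \<in> V" and v: "v \<in> V" and fe: "f u = f v" and ne: "u \<noteq> v"
    have m: "\<And>w. w \<in> f u \<longleftrightarrow> w \<in> f v" using fe by simp
    note utype = types[OF u] and vtype = types[OF v]
    consider (u0) "u = x0" | (u1) "u \<in> X" "u \<noteq> x0" | (u4) "u \<in> Y" "E x0 u" "u \<noteq> y1" | (u5) "u \<in> Z" "E x0 u" "u \<noteq> z1" | (u6) "u = y1" | (u7) "u = z1" | (u2) "u \<in> Y" "\<not> E x0 u" "ln V E x0 u \<noteq> ln V E x0 z1" | (u2p) "u \<in> Y" "\<not> E x0 u" "ln V E x0 u = ln V E x0 z1" | (u3) "u \<in> Z" "\<not> E x0 u" "ln V E x0 u \<noteq> ln V E x0 y1" | (u3p) "u \<in> Z" "\<not> E x0 u" "ln V E x0 u = ln V E x0 y1"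
      using utype by blast
    then show False
    proof cases
      case u0
      have fu: "f u = ln V E y1 z1" using u0 fT0 by blast
      consider (v0) "v = x0" | (v1) "v \<in> X" "v \<noteq> x0" | (v4) "v \<in> Y" "E x0 v" "v \<noteq> y1" | (v5) "v \<in> Z" "E x0 v" "v \<noteq> z1" | (v6) "v = y1" | (v7) "v = z1" | (v2) "v \<in> Y" "\<not> E x0 v" "ln V E x0 v \<noteq> ln V E x0 z1" | (v2p) "v \<in> Y" "\<not> E x0 v" "ln V E x0 v = ln V E x0 z1" | (v3) "v \<in> Z" "\<not> E x0 v" "ln V E x0 v \<noteq> ln V E x0 y1" | (v3p) "v \<in> Z" "\<not> E x0 v" "ln V E x0 v = ln V E x0 y1"
        using vtype by blast
      then show False
      proof cases
        case v0
        have fv: "f v = ln V E y1 z1" using v0 fT0 by blast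
        then show False using u0 v0 ne by simp
      next
        case v1
        have fv: "f v = ln V E x0 v" using v1 fT1 by blast
        show False using u0 v1 m[of "x0"] fu fv ne ctx by (auto simp: mems split: if_splits; meson cnI subsetD inV)
      next
        case v4
        have fv: "f v = ln V E v y1" using v4 fT4 by blast
        show False using u0 v4 m[of "x0"] fu fv ne ctx by (auto simp: mems split: if_splits; meson cnI subsetD inV)
      next
        case v5
        have fv: "f v = ln V E v zo" using v5 fT5 by blast
        show False using u0 v5 m[of "z1"] fu fv ne ctx by (auto simp: mems split: if_splits; meson cnI subsetD inV)
      next
        case v6
        have fv: "f v = ln V E x0 y1" using v6 fT6 by blast
        show False using u0 v6 m[of "x0"] fu fv ne ctx by (auto simp: mems split: if_splits; meson cnI subsetD inV)
      next
        case v7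
        have fv: "f v = ln V E x0 z1" using v7 fT7 by blast
        show False using u0 v7 m[of "x0"] fu fv ne ctx by (auto simp: mems split: if_splits; meson cnI subsetD inV)
      next
        case v2
        have fv: "f v = ln V E x0 v" using v2 fT2 by blast
        show False using u0 v2 m[of "x0"] fu fv ne ctx by (auto simp: mems split: if_splits; meson cnI subsetD inV)
      next
        case v2p
        have fv: "f v = ln V E v y1" using v2p fT2p by blast
        then show False using u0 v2p fe fu fv U1fact[of v] by auto
      next
        case v3
        have fv: "f v = ln V E x0 v" using v3 fT3 by blast
        show False using u0 v3 m[of "x0"] fu fv ne ctx by (auto simp: mems split: if_splits; meson cnI subsetD inV)
      next
        case v3p
        have fv: "f v = ln V E v z1" using v3p fT3p by blast
        then show False using u0 v3p fe fu fv U2fact[of v] by auto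
      qed
    next
      case u1
      have fu: "f u = ln V E x0 u" using u1 fT1 by blast
      consider (v0) "v = x0" | (v1) "v \<in> X" "v \<noteq> x0" | (v4) "v \<in> Y" "E x0 v" "v \<noteq> y1" | (v5) "v \<in> Z" "E x0 v" "v \<noteq> z1" | (v6) "v = y1" | (v7) "v = z1" | (v2) "v \<in> Y" "\<not> E x0 v" "ln V E x0 v \<noteq> ln V E x0 z1" | (v2p) "v \<in> Y" "\<not> E x0 v" "ln V E x0 v = ln V E x0 z1" | (v3) "v \<in> Z" "\<not> E x0 v" "ln V E x0 v \<noteq> ln V E x0 y1" | (v3p) "v \<in> Z" "\<not> E x0 v" "ln V E x0 v = ln V E x0 y1"
        using vtype by blast
      then show False
      proof cases
        case v0
        have fv: "f v = ln V E y1 z1" using v0 fT0 by blast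
        show False using u1 v0 m[of "x0"] fu fv ne ctx by (auto simp: mems split: if_splits; meson cnI subsetD inV)
      next
        case v1
        have fv: "f v = ln V E x0 v" using v1 fT1 by blast
        show False using u1 v1 m[of "u"] m[of "v"] fu fv ne ctx by (auto simp: mems split: if_splits; meson cnI subsetD inV)
      next
        case v4
        have fv: "f v = ln V E v y1" using v4 fT4 by blast
        show False using u1 v4 fe fu fv T1T4[OF x0 u1(1,2) y1 v4 zo] by auto
      next
        case v5
        have fv: "f v = ln V E v zo" using v5 fT5 by blast
        show False using u1 v5 m[of "x0"] fu fv ne ctx by (auto simp: mems split: if_splits; meson cnI subsetD inV)
      next
        case v6
        have fv: "f v = ln V E x0 y1" using v6 fT6 by blast
        show False using u1 v6 fe fu fv T1T6[OF x0 u1(1,2) y1 z1] by auto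
      next
        case v7
        have fv: "f v = ln V E x0 z1" using v7 fT7 by blast
        show False using u1 v7 fe fu fv bis.T1T6[OF swap x0 u1(1,2) z1 y1] by auto
      next
        case v2
        have fv: "f v = ln V E x0 v" using v2 fT2 by blast
        show False using u1 v2 fe fu fv T1T2[OF x0 u1(1,2) y1 v2(1,2)] by auto
      next
        case v2p
        have fv: "f v = ln V E v y1" using v2p fT2p by blast
        show False using u1 v2p m[of "x0"] fu fv ne ctx by (auto simp: mems split: if_splits; meson cnI subsetD inV)
      next
        case v3
        have fv: "f v = ln V E x0 v" using v3 fT3 by blast
        show False using u1 v3 fe fu fv bis.T1T2[OF swap x0 u1(1,2) z1 v3(1,2)] by auto
      next
        case v3p
        have fv: "f v = ln V E v z1" using v3p fT3p by blast
        show False using u1 v3p m[of "x0"] fu fv ne ctx by (auto simp: mems split: if_splits; meson cnI subsetD inV)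
      qed
    next
      case u4
      have fu: "f u = ln V E u y1" using u4 fT4 by blast
      consider (v0) "v = x0" | (v1) "v \<in> X" "v \<noteq> x0" | (v4) "v \<in> Y" "E x0 v" "v \<noteq> y1" | (v5) "v \<in> Z" "E x0 v" "v \<noteq> z1" | (v6) "v = y1" | (v7) "v = z1" | (v2) "v \<in> Y" "\<not> E x0 v" "ln V E x0 v \<noteq> ln V E x0 z1" | (v2p) "v \<in> Y" "\<not> E x0 v" "ln V E x0 v = ln V E x0 z1" | (v3) "v \<in> Z" "\<not> E x0 v" "ln V E x0 v \<noteq> ln V E x0 y1" | (v3p) "v \<in> Z" "\<not> E x0 v" "ln V E x0 v = ln V E x0 y1"
        using vtype by blast
      then show False
      proof cases
        case v0
        have fv: "f v = ln V E y1 z1" using v0 fT0 by blast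
        show False using u4 v0 m[of "x0"] fu fv ne ctx by (auto simp: mems split: if_splits; meson cnI subsetD inV)
      next
        case v1
        have fv: "f v = ln V E x0 v" using v1 fT1 by blast
        show False using u4 v1 fe fu fv T1T4[OF x0 v1(1,2) y1 u4 zo] by auto
      next
        case v4
        have fv: "f v = ln V E v y1" using v4 fT4 by blast
        show False using u4 v4 m[of "u"] m[of "v"] fu fv ne ctx by (auto simp: mems split: if_splits; meson cnI subsetD inV)
      next
        case v5
        have fv: "f v = ln V E v zo" using v5 fT5 by blast
        show False using u4 v5 m[of "x0"] fu fv ne ctx by (auto simp: mems split: if_splits; meson cnI subsetD inV)
      next
        case v6
        have fv: "f v = ln V E x0 y1" using v6 fT6 by blast
        show False using u4 v6 m[of "z1"] fu fv ne ctx by (auto simp: mems split: if_splits; meson cnI subsetD inV)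
      next
        case v7
        have fv: "f v = ln V E x0 z1" using v7 fT7 by blast
        show False using u4 v7 m[of "y1"] fu fv ne ctx by (auto simp: mems split: if_splits; meson cnI subsetD inV)
      next
        case v2
        have fv: "f v = ln V E x0 v" using v2 fT2 by blast
        show False using u4 v2 m[of "y1"] fu fv ne ctx by (auto simp: mems split: if_splits; meson cnI subsetD inV)
      next
        case v2p
        have fv: "f v = ln V E v y1" using v2p fT2p by blast
        show False using u4 v2p m[of "x0"] fu fv ne ctx by (auto simp: mems split: if_splits; meson cnI subsetD inV)
      next
        case v3
        have fv: "f v = ln V E x0 v" using v3 fT3 by blast
        show False using u4 v3 m[of "z1"] fu fv ne ctx by (auto simp: mems split: if_splits; meson cnI subsetD inV)
      next
        case v3p
        have fv: "f v = ln V E v z1" using v3p fT3p by blast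
        show False using u4 v3p m[of "x0"] fu fv ne ctx by (auto simp: mems split: if_splits; meson cnI subsetD inV)
      qed
    next
      case u5
      have fu: "f u = ln V E u zo" using u5 fT5 by blast
      consider (v0) "v = x0" | (v1) "v \<in> X" "v \<noteq> x0" | (v4) "v \<in> Y" "E x0 v" "v \<noteq> y1" | (v5) "v \<in> Z" "E x0 v" "v \<noteq> z1" | (v6) "v = y1" | (v7) "v = z1" | (v2) "v \<in> Y" "\<not> E x0 v" "ln V E x0 v \<noteq> ln V E x0 z1" | (v2p) "v \<in> Y" "\<not> E x0 v" "ln V E x0 v = ln V E x0 z1" | (v3) "v \<in> Z" "\<not> E x0 v" "ln V E x0 v \<noteq> ln V E x0 y1" | (v3p) "v \<in> Z" "\<not> E x0 v" "ln V E x0 v = ln V E x0 y1"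
        using vtype by blast
      then show False
      proof cases
        case v0
        have fv: "f v = ln V E y1 z1" using v0 fT0 by blast
        show False using u5 v0 m[of "z1"] fu fv ne ctx by (auto simp: mems split: if_splits; meson cnI subsetD inV)
      next
        case v1
        have fv: "f v = ln V E x0 v" using v1 fT1 by blast
        show False using u5 v1 m[of "x0"] fu fv ne ctx by (auto simp: mems split: if_splits; meson cnI subsetD inV)
      next
        case v4
        have fv: "f v = ln V E v y1" using v4 fT4 by blast
        show False using u5 v4 m[of "x0"] fu fv ne ctx by (auto simp: mems split: if_splits; meson cnI subsetD inV)
      next
        case v5
        have fv: "f v = ln V E v zo" using v5 fT5 by blast
        show False using u5 v5 m[of "u"] m[of "v"] fu fv ne ctx by (auto simp: mems split: if_splits; meson cnI subsetD inV)
      next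
        case v6
        have fv: "f v = ln V E x0 y1" using v6 fT6 by blast
        show False using u5 v6 m[of "x0"] fu fv ne ctx by (auto simp: mems split: if_splits; meson cnI subsetD inV)
      next
        case v7
        have fv: "f v = ln V E x0 z1" using v7 fT7 by blast
        show False using u5 v7 m[of "x0"] fu fv ne ctx by (auto simp: mems split: if_splits; meson cnI subsetD inV)
      next
        case v2
        have fv: "f v = ln V E x0 v" using v2 fT2 by blast
        show False using u5 v2 m[of "x0"] fu fv ne ctx by (auto simp: mems split: if_splits; meson cnI subsetD inV)
      next
        case v2p
        have fv: "f v = ln V E v y1" using v2p fT2p by blast
        show False using u5 v2p m[of "z1"] fu fv ne ctx by (auto simp: mems split: if_splits; meson cnI subsetD inV)
      next
        case v3
        have fv: "f v = ln V E x0 v" using v3 fT3 by blast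
        show False using u5 v3 m[of "x0"] fu fv ne ctx by (auto simp: mems split: if_splits; meson cnI subsetD inV)
      next
        case v3p
        have fv: "f v = ln V E v z1" using v3p fT3p by blast
        show False using u5 v3p m[of "z1"] fu fv ne ctx by (auto simp: mems split: if_splits; meson cnI subsetD inV)
      qed
    next
      case u6
      have fu: "f u = ln V E x0 y1" using u6 fT6 by blast
      consider (v0) "v = x0" | (v1) "v \<in> X" "v \<noteq> x0" | (v4) "v \<in> Y" "E x0 v" "v \<noteq> y1" | (v5) "v \<in> Z" "E x0 v" "v \<noteq> z1" | (v6) "v = y1" | (v7) "v = z1" | (v2) "v \<in> Y" "\<not> E x0 v" "ln V E x0 v \<noteq> ln V E x0 z1" | (v2p) "v \<in> Y" "\<not> E x0 v" "ln V E x0 v = ln V E x0 z1" | (v3) "v \<in> Z" "\<not> E x0 v" "ln V E x0 v \<noteq> ln V E x0 y1" | (v3p) "v \<in> Z" "\<not> E x0 v" "ln V E x0 v = ln V E x0 y1"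
        using vtype by blast
      then show False
      proof cases
        case v0
        have fv: "f v = ln V E y1 z1" using v0 fT0 by blast
        show False using u6 v0 m[of "x0"] fu fv ne ctx by (auto simp: mems split: if_splits; meson cnI subsetD inV)
      next
        case v1
        have fv: "f v = ln V E x0 v" using v1 fT1 by blast
        show False using u6 v1 fe fu fv T1T6[OF x0 v1(1,2) y1 z1] by auto
      next
        case v4
        have fv: "f v = ln V E v y1" using v4 fT4 by blast
        show False using u6 v4 m[of "z1"] fu fv ne ctx by (auto simp: mems split: if_splits; meson cnI subsetD inV)
      next
        case v5
        have fv: "f v = ln V E v zo" using v5 fT5 by blast
        show False using u6 v5 m[of "x0"] fu fv ne ctx by (auto simp: mems split: if_splits; meson cnI subsetD inV)
      next
        case v6
        have fv: "f v = ln V E x0 y1" using v6 fT6 by blast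
        then show False using u6 v6 ne by simp
      next
        case v7
        have fv: "f v = ln V E x0 z1" using v7 fT7 by blast
        show False using u6 v7 m[of "y1"] fu fv ne ctx by (auto simp: mems split: if_splits; meson cnI subsetD inV)
      next
        case v2
        have fv: "f v = ln V E x0 v" using v2 fT2 by blast
        show False using u6 v2 m[of "y1"] fu fv ne ctx by (auto simp: mems split: if_splits; meson cnI subsetD inV)
      next
        case v2p
        have fv: "f v = ln V E v y1" using v2p fT2p by blast
        show False using u6 v2p m[of "x0"] fu fv ne ctx by (auto simp: mems split: if_splits; meson cnI subsetD inV)
      next
        case v3
        have fv: "f v = ln V E x0 v" using v3 fT3 by blast
        then show False using u6 v3 fe fu fv by auto
      next
        case v3p
        have fv: "f v = ln V E v z1" using v3p fT3p by blast
        show False using u6 v3p m[of "x0"] fu fv ne ctx by (auto simp: mems split: if_splits; meson cnI subsetD inV)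
      qed
    next
      case u7
      have fu: "f u = ln V E x0 z1" using u7 fT7 by blast
      consider (v0) "v = x0" | (v1) "v \<in> X" "v \<noteq> x0" | (v4) "v \<in> Y" "E x0 v" "v \<noteq> y1" | (v5) "v \<in> Z" "E x0 v" "v \<noteq> z1" | (v6) "v = y1" | (v7) "v = z1" | (v2) "v \<in> Y" "\<not> E x0 v" "ln V E x0 v \<noteq> ln V E x0 z1" | (v2p) "v \<in> Y" "\<not> E x0 v" "ln V E x0 v = ln V E x0 z1" | (v3) "v \<in> Z" "\<not> E x0 v" "ln V E x0 v \<noteq> ln V E x0 y1" | (v3p) "v \<in> Z" "\<not> E x0 v" "ln V E x0 v = ln V E x0 y1"
        using vtype by blast
      then show False
      proof cases
        case v0
        have fv: "f v = ln V E y1 z1" using v0 fT0 by blast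
        show False using u7 v0 m[of "x0"] fu fv ne ctx by (auto simp: mems split: if_splits; meson cnI subsetD inV)
      next
        case v1
        have fv: "f v = ln V E x0 v" using v1 fT1 by blast
        show False using u7 v1 fe fu fv bis.T1T6[OF swap x0 v1(1,2) z1 y1] by auto
      next
        case v4
        have fv: "f v = ln V E v y1" using v4 fT4 by blast
        show False using u7 v4 m[of "y1"] fu fv ne ctx by (auto simp: mems split: if_splits; meson cnI subsetD inV)
      next
        case v5
        have fv: "f v = ln V E v zo" using v5 fT5 by blast
        show False using u7 v5 m[of "x0"] fu fv ne ctx by (auto simp: mems split: if_splits; meson cnI subsetD inV)
      next
        case v6
        have fv: "f v = ln V E x0 y1" using v6 fT6 by blast
        show False using u7 v6 m[of "y1"] fu fv ne ctx by (auto simp: mems split: if_splits; meson cnI subsetD inV)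
      next
        case v7
        have fv: "f v = ln V E x0 z1" using v7 fT7 by blast
        then show False using u7 v7 ne by simp
      next
        case v2
        have fv: "f v = ln V E x0 v" using v2 fT2 by blast
        then show False using u7 v2 fe fu fv by auto
      next
        case v2p
        have fv: "f v = ln V E v y1" using v2p fT2p by blast
        show False using u7 v2p m[of "x0"] fu fv ne ctx by (auto simp: mems split: if_splits; meson cnI subsetD inV)
      next
        case v3
        have fv: "f v = ln V E x0 v" using v3 fT3 by blast
        show False using u7 v3 m[of "y1"] fu fv ne ctx by (auto simp: mems split: if_splits; meson cnI subsetD inV)
      next
        case v3p
        have fv: "f v = ln V E v z1" using v3p fT3p by blast
        show False using u7 v3p m[of "x0"] fu fv ne ctx by (auto simp: mems split: if_splits; meson cnI subsetD inV)
      qed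
    next
      case u2
      have fu: "f u = ln V E x0 u" using u2 fT2 by blast
      consider (v0) "v = x0" | (v1) "v \<in> X" "v \<noteq> x0" | (v4) "v \<in> Y" "E x0 v" "v \<noteq> y1" | (v5) "v \<in> Z" "E x0 v" "v \<noteq> z1" | (v6) "v = y1" | (v7) "v = z1" | (v2) "v \<in> Y" "\<not> E x0 v" "ln V E x0 v \<noteq> ln V E x0 z1" | (v2p) "v \<in> Y" "\<not> E x0 v" "ln V E x0 v = ln V E x0 z1" | (v3) "v \<in> Z" "\<not> E x0 v" "ln V E x0 v \<noteq> ln V E x0 y1" | (v3p) "v \<in> Z" "\<not> E x0 v" "ln V E x0 v = ln V E x0 y1"
        using vtype by blast
      then show False
      proof cases
        case v0
        have fv: "f v = ln V E y1 z1" using v0 fT0 by blast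
        show False using u2 v0 m[of "x0"] fu fv ne ctx by (auto simp: mems split: if_splits; meson cnI subsetD inV)
      next
        case v1
        have fv: "f v = ln V E x0 v" using v1 fT1 by blast
        show False using u2 v1 fe fu fv T1T2[OF x0 v1(1,2) y1 u2(1,2)] by auto
      next
        case v4
        have fv: "f v = ln V E v y1" using v4 fT4 by blast
        show False using u2 v4 m[of "y1"] fu fv ne ctx by (auto simp: mems split: if_splits; meson cnI subsetD inV)
      next
        case v5
        have fv: "f v = ln V E v zo" using v5 fT5 by blast
        show False using u2 v5 m[of "x0"] fu fv ne ctx by (auto simp: mems split: if_splits; meson cnI subsetD inV)
      next
        case v6
        have fv: "f v = ln V E x0 y1" using v6 fT6 by blast
        show False using u2 v6 m[of "y1"] fu fv ne ctx by (auto simp: mems split: if_splits; meson cnI subsetD inV)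
      next
        case v7
        have fv: "f v = ln V E x0 z1" using v7 fT7 by blast
        then show False using u2 v7 fe fu fv by auto
      next
        case v2
        have fv: "f v = ln V E x0 v" using v2 fT2 by blast
        show False using u2 v2 m[of "u"] m[of "v"] fu fv ne ctx by (auto simp: mems split: if_splits; meson cnI subsetD inV)
      next
        case v2p
        have fv: "f v = ln V E v y1" using v2p fT2p by blast
        show False using u2 v2p m[of "x0"] fu fv ne ctx by (auto simp: mems split: if_splits; meson cnI subsetD inV)
      next
        case v3
        have fv: "f v = ln V E x0 v" using v3 fT3 by blast
        show False using u2 v3 m[of "u"] fu fv ne ctx by (auto simp: mems split: if_splits; meson cnI subsetD inV)
      next
        case v3p
        have fv: "f v = ln V E v z1" using v3p fT3p by blast
        show False using u2 v3p m[of "x0"] fu fv ne ctx by (auto simp: mems split: if_splits; meson cnI subsetD inV)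
      qed
    next
      case u2p
      have fu: "f u = ln V E u y1" using u2p fT2p by blast
      consider (v0) "v = x0" | (v1) "v \<in> X" "v \<noteq> x0" | (v4) "v \<in> Y" "E x0 v" "v \<noteq> y1" | (v5) "v \<in> Z" "E x0 v" "v \<noteq> z1" | (v6) "v = y1" | (v7) "v = z1" | (v2) "v \<in> Y" "\<not> E x0 v" "ln V E x0 v \<noteq> ln V E x0 z1" | (v2p) "v \<in> Y" "\<not> E x0 v" "ln V E x0 v = ln V E x0 z1" | (v3) "v \<in> Z" "\<not> E x0 v" "ln V E x0 v \<noteq> ln V E x0 y1" | (v3p) "v \<in> Z" "\<not> E x0 v" "ln V E x0 v = ln V E x0 y1"
        using vtype by blast
      then show False
      proof cases
        case v0
        have fv: "f v = ln V E y1 z1" using v0 fT0 by blast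
        then show False using u2p v0 fe fu fv U1fact[of u] by auto
      next
        case v1
        have fv: "f v = ln V E x0 v" using v1 fT1 by blast
        show False using u2p v1 m[of "x0"] fu fv ne ctx by (auto simp: mems split: if_splits; meson cnI subsetD inV)
      next
        case v4
        have fv: "f v = ln V E v y1" using v4 fT4 by blast
        show False using u2p v4 m[of "x0"] fu fv ne ctx by (auto simp: mems split: if_splits; meson cnI subsetD inV)
      next
        case v5
        have fv: "f v = ln V E v zo" using v5 fT5 by blast
        show False using u2p v5 m[of "z1"] fu fv ne ctx by (auto simp: mems split: if_splits; meson cnI subsetD inV)
      next
        case v6
        have fv: "f v = ln V E x0 y1" using v6 fT6 by blast
        show False using u2p v6 m[of "x0"] fu fv ne ctx by (auto simp: mems split: if_splits; meson cnI subsetD inV)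
      next
        case v7
        have fv: "f v = ln V E x0 z1" using v7 fT7 by blast
        show False using u2p v7 m[of "x0"] fu fv ne ctx by (auto simp: mems split: if_splits; meson cnI subsetD inV)
      next
        case v2
        have fv: "f v = ln V E x0 v" using v2 fT2 by blast
        show False using u2p v2 m[of "x0"] fu fv ne ctx by (auto simp: mems split: if_splits; meson cnI subsetD inV)
      next
        case v2p
        have fv: "f v = ln V E v y1" using v2p fT2p by blast
        show False using u2p v2p m[of "u"] m[of "v"] fu fv ne ctx by (auto simp: mems split: if_splits; meson cnI subsetD inV)
      next
        case v3
        have fv: "f v = ln V E x0 v" using v3 fT3 by blast
        show False using u2p v3 m[of "x0"] fu fv ne ctx by (auto simp: mems split: if_splits; meson cnI subsetD inV)
      next
        case v3p
        have fv: "f v = ln V E v z1" using v3p fT3p by blast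
        then show False using u2p v3p fe fu fv U3fact[of u v] by auto
      qed
    next
      case u3
      have fu: "f u = ln V E x0 u" using u3 fT3 by blast
      consider (v0) "v = x0" | (v1) "v \<in> X" "v \<noteq> x0" | (v4) "v \<in> Y" "E x0 v" "v \<noteq> y1" | (v5) "v \<in> Z" "E x0 v" "v \<noteq> z1" | (v6) "v = y1" | (v7) "v = z1" | (v2) "v \<in> Y" "\<not> E x0 v" "ln V E x0 v \<noteq> ln V E x0 z1" | (v2p) "v \<in> Y" "\<not> E x0 v" "ln V E x0 v = ln V E x0 z1" | (v3) "v \<in> Z" "\<not> E x0 v" "ln V E x0 v \<noteq> ln V E x0 y1" | (v3p) "v \<in> Z" "\<not> E x0 v" "ln V E x0 v = ln V E x0 y1"
        using vtype by blast
      then show False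
      proof cases
        case v0
        have fv: "f v = ln V E y1 z1" using v0 fT0 by blast
        show False using u3 v0 m[of "x0"] fu fv ne ctx by (auto simp: mems split: if_splits; meson cnI subsetD inV)
      next
        case v1
        have fv: "f v = ln V E x0 v" using v1 fT1 by blast
        show False using u3 v1 fe fu fv bis.T1T2[OF swap x0 v1(1,2) z1 u3(1,2)] by auto
      next
        case v4
        have fv: "f v = ln V E v y1" using v4 fT4 by blast
        show False using u3 v4 m[of "z1"] fu fv ne ctx by (auto simp: mems split: if_splits; meson cnI subsetD inV)
      next
        case v5
        have fv: "f v = ln V E v zo" using v5 fT5 by blast
        show False using u3 v5 m[of "x0"] fu fv ne ctx by (auto simp: mems split: if_splits; meson cnI subsetD inV)
      next
        case v6
        have fv: "f v = ln V E x0 y1" using v6 fT6 by blast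
        then show False using u3 v6 fe fu fv by auto
      next
        case v7
        have fv: "f v = ln V E x0 z1" using v7 fT7 by blast
        show False using u3 v7 m[of "y1"] fu fv ne ctx by (auto simp: mems split: if_splits; meson cnI subsetD inV)
      next
        case v2
        have fv: "f v = ln V E x0 v" using v2 fT2 by blast
        show False using u3 v2 m[of "v"] fu fv ne ctx by (auto simp: mems split: if_splits; meson cnI subsetD inV)
      next
        case v2p
        have fv: "f v = ln V E v y1" using v2p fT2p by blast
        show False using u3 v2p m[of "x0"] fu fv ne ctx by (auto simp: mems split: if_splits; meson cnI subsetD inV)
      next
        case v3
        have fv: "f v = ln V E x0 v" using v3 fT3 by blast
        show False using u3 v3 m[of "u"] m[of "v"] fu fv ne ctx by (auto simp: mems split: if_splits; meson cnI subsetD inV)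
      next
        case v3p
        have fv: "f v = ln V E v z1" using v3p fT3p by blast
        show False using u3 v3p m[of "x0"] fu fv ne ctx by (auto simp: mems split: if_splits; meson cnI subsetD inV)
      qed
    next
      case u3p
      have fu: "f u = ln V E u z1" using u3p fT3p by blast
      consider (v0) "v = x0" | (v1) "v \<in> X" "v \<noteq> x0" | (v4) "v \<in> Y" "E x0 v" "v \<noteq> y1" | (v5) "v \<in> Z" "E x0 v" "v \<noteq> z1" | (v6) "v = y1" | (v7) "v = z1" | (v2) "v \<in> Y" "\<not> E x0 v" "ln V E x0 v \<noteq> ln V E x0 z1" | (v2p) "v \<in> Y" "\<not> E x0 v" "ln V E x0 v = ln V E x0 z1" | (v3) "v \<in> Z" "\<not> E x0 v" "ln V E x0 v \<noteq> ln V E x0 y1" | (v3p) "v \<in> Z" "\<not> E x0 v" "ln V E x0 v = ln V E x0 y1"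
        using vtype by blast
      then show False
      proof cases
        case v0
        have fv: "f v = ln V E y1 z1" using v0 fT0 by blast
        then show False using u3p v0 fe fu fv U2fact[of u] by auto
      next
        case v1
        have fv: "f v = ln V E x0 v" using v1 fT1 by blast
        show False using u3p v1 m[of "x0"] fu fv ne ctx by (auto simp: mems split: if_splits; meson cnI subsetD inV)
      next
        case v4
        have fv: "f v = ln V E v y1" using v4 fT4 by blast
        show False using u3p v4 m[of "x0"] fu fv ne ctx by (auto simp: mems split: if_splits; meson cnI subsetD inV)
      next
        case v5
        have fv: "f v = ln V E v zo" using v5 fT5 by blast
        show False using u3p v5 m[of "z1"] fu fv ne ctx by (auto simp: mems split: if_splits; meson cnI subsetD inV)
      next
        case v6
        have fv: "f v = ln V E x0 y1" using v6 fT6 by blast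
        show False using u3p v6 m[of "x0"] fu fv ne ctx by (auto simp: mems split: if_splits; meson cnI subsetD inV)
      next
        case v7
        have fv: "f v = ln V E x0 z1" using v7 fT7 by blast
        show False using u3p v7 m[of "x0"] fu fv ne ctx by (auto simp: mems split: if_splits; meson cnI subsetD inV)
      next
        case v2
        have fv: "f v = ln V E x0 v" using v2 fT2 by blast
        show False using u3p v2 m[of "x0"] fu fv ne ctx by (auto simp: mems split: if_splits; meson cnI subsetD inV)
      next
        case v2p
        have fv: "f v = ln V E v y1" using v2p fT2p by blast
        then show False using u3p v2p fe fu fv U3fact[of v u] by auto
      next
        case v3
        have fv: "f v = ln V E x0 v" using v3 fT3 by blast
        show False using u3p v3 m[of "x0"] fu fv ne ctx by (auto simp: mems split: if_splits; meson cnI subsetD inV)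
      next
        case v3p
        have fv: "f v = ln V E v z1" using v3p fT3p by blast
        show False using u3p v3p m[of "u"] m[of "v"] fu fv ne ctx by (auto simp: mems split: if_splits; meson cnI subsetD inV)
      qed
    qed
  qed
  have img: "f ` V \<subseteq> lines V (dd V E)"
  proof
    fix L assume "L \<in> f ` V"
    then obtain w where w: "w \<in> V" "L = f w" by blast
    have yz: "y1 \<noteq> z1" using y1 z1 dYZ by blast
    from types[OF w(1)] show "L \<in> lines V (dd V E)"
      using w ctx yz fT0 fT1 fT4 fT5 fT6 fT7 fT2 fT2p fT3 fT3p
      by (elim disjE) (auto intro!: lnI)
  qed
  show ?thesis using card_inj_on_le[OF inj img fin_lines] .
qed


lemma CU:
  assumes comp: "\<And>x w. x \<in> X \<Longrightarrow> w \<in> Y \<or> w \<in> Z \<Longrightarrow> E x w"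
    and y: "y \<in> Y" "y1 \<in> Y" "y \<noteq> y1" and sub: "Y \<subseteq> ln V E y y1"
  shows "ln V E y y1 = V"
proof
  show "ln V E y y1 \<subseteq> V" using ln_sub y inV by blast
  show "V \<subseteq> ln V E y y1"
  proof
    fix w assume "w \<in> V"
    then consider "w \<in> X" | "w \<in> Y" | "w \<in> Z" using XYZ by blast
    then show "w \<in> ln V E y y1"
    proof cases
      case 1 then show ?thesis using comp[of w y] comp[of w y1] y by (simp add: mems)
    next
      case 2 then show ?thesis using sub by blast
    next
      case 3 then show ?thesis using y by (simp add: mems)
    qed
  qed
qed

lemma main2:
  assumes comp: "\<And>x w. x \<in> X \<Longrightarrow> w \<in> Y \<or> w \<in> Z \<Longrightarrow> E x w"
    and nouni: "\<And>a b. a \<in> V \<Longrightarrow> b \<in> V \<Longrightarrow> a \<noteq> b \<Longrightarrow> ln V E a b \<noteq> V"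
  shows "card V \<le> card (lines V (dd V E))"
proof -
  obtain x0 where x0: "x0 \<in> X" using Xne by blast
  obtain y1 where y1: "y1 \<in> Y" "E x0 y1" using Xnb x0 by blast
  obtain z1 where z1: "z1 \<in> Z" "E x0 z1" using Xnb x0 by blast
  define f where "f v = (if v = x0 then ln V E y1 z1
      else if v \<in> X then ln V E x0 v
      else if v \<in> Y \<and> v \<noteq> y1 then ln V E v y1
      else if v \<in> Z \<and> v \<noteq> z1 then ln V E v z1
      else if v = y1 then ln V E x0 y1
      else ln V E x0 z1)" for v
  have nX: "\<And>v. v \<in> Y \<Longrightarrow> v \<notin> X" "\<And>v. v \<in> Z \<Longrightarrow> v \<notin> X" "\<And>v. v \<in> Z \<Longrightarrow> v \<notin> Y"
    using dXY dXZ dYZ by blast+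
  have fT0: "f x0 = ln V E y1 z1" by (simp add: f_def)
  have fT1: "\<And>v. v \<in> X \<Longrightarrow> v \<noteq> x0 \<Longrightarrow> f v = ln V E x0 v" by (simp add: f_def)
  have fT4: "\<And>v. v \<in> Y \<Longrightarrow> v \<noteq> y1 \<Longrightarrow> f v = ln V E v y1"
    using x0 nX by (auto simp: f_def)
  have fT5: "\<And>v. v \<in> Z \<Longrightarrow> v \<noteq> z1 \<Longrightarrow> f v = ln V E v z1"
    using x0 nX by (auto simp: f_def)
  have fT6: "f y1 = ln V E x0 y1" using x0 y1 nX by (auto simp: f_def)
  have fT7: "f z1 = ln V E x0 z1" using x0 z1 y1 nX by (auto simp: f_def)
  have types: "w = x0 \<or> (w \<in> X \<and> w \<noteq> x0) \<or> (w \<in> Y \<and> w \<noteq> y1) \<or> (w \<in> Z \<and> w \<noteq> z1)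
    \<or> w = y1 \<or> w = z1" if "w \<in> V" for w
    using that XYZ by blast
  have cnall: "\<And>x x'. x \<in> X \<Longrightarrow> x' \<in> X \<Longrightarrow> cn V E x x'"
    using cnI[of y1] comp y1 inV by blast
  have subX: "Y \<subseteq> ln V E x0 x'" "Z \<subseteq> ln V E x0 x'" if "x' \<in> X" "x' \<noteq> x0" for x'
    using that x0 comp cnall by (auto simp: mems)
  have UcA: "ln V E x0 x' \<noteq> ln V E y y1" if "x' \<in> X" "x' \<noteq> x0" "y \<in> Y" "y \<noteq> y1" for x' y
  proof
    assume "ln V E x0 x' = ln V E y y1"
    then have "ln V E y y1 = V" using CU[OF comp that(3) y1(1) that(4)] subX[OF that(1,2)] by auto
    then show False using nouni[of y y1] that(3,4) y1(1) inV by blast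
  qed
  have UcB: "ln V E x0 x' \<noteq> ln V E z z1" if "x' \<in> X" "x' \<noteq> x0" "z \<in> Z" "z \<noteq> z1" for x' z
  proof
    assume "ln V E x0 x' = ln V E z z1"
    then have "ln V E z z1 = V" using bis.CU[OF swap _ that(3) z1(1) that(4)] comp subX[OF that(1,2)] by auto
    then show False using nouni[of z z1] that(3,4) z1(1) inV by blast
  qed
  have UcC: "ln V E y y1 \<noteq> ln V E z z1" if "y \<in> Y" "y \<noteq> y1" "z \<in> Z" "z \<noteq> z1" for y z
  proof
    assume e: "ln V E y y1 = ln V E z z1"
    have "Y \<subseteq> ln V E z z1" using that(3,4) z1(1) by (auto simp: bis.mem_YY[OF swap])
    then have "ln V E y y1 = V" using CU[OF comp that(1) y1(1) that(2)] e by auto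
    then show False using nouni[of y y1] that(1,2) y1(1) inV by blast
  qed
  note ctx = x0 y1 z1 dXY dXZ dYZ inV cnI nX comp cnall
  have inj: "inj_on f V"
  proof (rule inj_onI, rule ccontr)
    fix u v assume u: "u \<in> V" and v: "v \<in> V" and fe: "f u = f v" and ne: "u \<noteq> v"
    have m: "\<And>w. w \<in> f u \<longleftrightarrow> w \<in> f v" using fe by simp
    consider (u0) "u = x0" | (u1) "u \<in> X" "u \<noteq> x0" | (u4) "u \<in> Y" "u \<noteq> y1" | (u5) "u \<in> Z" "u \<noteq> z1" | (u6) "u = y1" | (u7) "u = z1"
      using types[OF u] by blast
    then show False
    proof cases
      case u0
      have fu: "f u = ln V E y1 z1" using u0 fT0 by blast
      consider (v0) "v = x0" | (v1) "v \<in> X" "v \<noteq> x0" | (v4) "v \<in> Y" "v \<noteq> y1" | (v5) "v \<in> Z" "v \<noteq> z1" | (v6) "v = y1" | (v7) "v = z1"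
        using types[OF v] by blast
      then show False
      proof cases
        case v0
        have fv: "f v = ln V E y1 z1" using v0 fT0 by blast
        then show False using u0 v0 ne by simp
      next
        case v1
        have fv: "f v = ln V E x0 v" using v1 fT1 by blast
        show False using u0 v1 m[of "x0"] fu fv ne ctx by (auto simp: mems)
      next
        case v4
        have fv: "f v = ln V E v y1" using v4 fT4 by blast
        show False using u0 v4 m[of "x0"] fu fv ne ctx by (auto simp: mems)
      next
        case v5
        have fv: "f v = ln V E v z1" using v5 fT5 by blast
        show False using u0 v5 m[of "x0"] fu fv ne ctx by (auto simp: mems)
      next
        case v6
        have fv: "f v = ln V E x0 y1" using v6 fT6 by blast
        show False using u0 v6 m[of "x0"] fu fv ne ctx by (auto simp: mems)
      next
        case v7
        have fv: "f v = ln V E x0 z1" using v7 fT7 by blast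
        show False using u0 v7 m[of "x0"] fu fv ne ctx by (auto simp: mems)
      qed
    next
      case u1
      have fu: "f u = ln V E x0 u" using u1 fT1 by blast
      consider (v0) "v = x0" | (v1) "v \<in> X" "v \<noteq> x0" | (v4) "v \<in> Y" "v \<noteq> y1" | (v5) "v \<in> Z" "v \<noteq> z1" | (v6) "v = y1" | (v7) "v = z1"
        using types[OF v] by blast
      then show False
      proof cases
        case v0
        have fv: "f v = ln V E y1 z1" using v0 fT0 by blast
        show False using u1 v0 m[of "x0"] fu fv ne ctx by (auto simp: mems)
      next
        case v1
        have fv: "f v = ln V E x0 v" using v1 fT1 by blast
        show False using u1 v1 m[of "u"] m[of "v"] fu fv ne ctx by (auto simp: mems)
      next
        case v4
        have fv: "f v = ln V E v y1" using v4 fT4 by blast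
        show False using u1 v4 fe fu fv UcA[OF u1 v4] by metis
      next
        case v5
        have fv: "f v = ln V E v z1" using v5 fT5 by blast
        show False using u1 v5 fe fu fv UcB[OF u1 v5] by metis
      next
        case v6
        have fv: "f v = ln V E x0 y1" using v6 fT6 by blast
        show False using u1 v6 m[of "z1"] fu fv ne ctx by (auto simp: mems)
      next
        case v7
        have fv: "f v = ln V E x0 z1" using v7 fT7 by blast
        show False using u1 v7 m[of "y1"] fu fv ne ctx by (auto simp: mems)
      qed
    next
      case u4
      have fu: "f u = ln V E u y1" using u4 fT4 by blast
      consider (v0) "v = x0" | (v1) "v \<in> X" "v \<noteq> x0" | (v4) "v \<in> Y" "v \<noteq> y1" | (v5) "v \<in> Z" "v \<noteq> z1" | (v6) "v = y1" | (v7) "v = z1"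
        using types[OF v] by blast
      then show False
      proof cases
        case v0
        have fv: "f v = ln V E y1 z1" using v0 fT0 by blast
        show False using u4 v0 m[of "x0"] fu fv ne ctx by (auto simp: mems)
      next
        case v1
        have fv: "f v = ln V E x0 v" using v1 fT1 by blast
        show False using u4 v1 fe fu fv UcA[OF v1 u4] by metis
      next
        case v4
        have fv: "f v = ln V E v y1" using v4 fT4 by blast
        show False using u4 v4 m[of "u"] m[of "v"] fu fv ne ctx by (auto simp: mems)
      next
        case v5
        have fv: "f v = ln V E v z1" using v5 fT5 by blast
        show False using u4 v5 fe fu fv UcC[OF u4 v5] by metis
      next
        case v6
        have fv: "f v = ln V E x0 y1" using v6 fT6 by blast
        show False using u4 v6 m[of "z1"] fu fv ne ctx by (auto simp: mems)
      next
        case v7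
        have fv: "f v = ln V E x0 z1" using v7 fT7 by blast
        show False using u4 v7 m[of "y1"] fu fv ne ctx by (auto simp: mems)
      qed
    next
      case u5
      have fu: "f u = ln V E u z1" using u5 fT5 by blast
      consider (v0) "v = x0" | (v1) "v \<in> X" "v \<noteq> x0" | (v4) "v \<in> Y" "v \<noteq> y1" | (v5) "v \<in> Z" "v \<noteq> z1" | (v6) "v = y1" | (v7) "v = z1"
        using types[OF v] by blast
      then show False
      proof cases
        case v0
        have fv: "f v = ln V E y1 z1" using v0 fT0 by blast
        show False using u5 v0 m[of "x0"] fu fv ne ctx by (auto simp: mems)
      next
        case v1
        have fv: "f v = ln V E x0 v" using v1 fT1 by blast
        show False using u5 v1 fe fu fv UcB[OF v1 u5] by metis
      next
        case v4
        have fv: "f v = ln V E v y1" using v4 fT4 by blast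
        show False using u5 v4 fe fu fv UcC[OF v4 u5] by metis
      next
        case v5
        have fv: "f v = ln V E v z1" using v5 fT5 by blast
        show False using u5 v5 m[of "u"] m[of "v"] fu fv ne ctx by (auto simp: mems)
      next
        case v6
        have fv: "f v = ln V E x0 y1" using v6 fT6 by blast
        show False using u5 v6 m[of "z1"] fu fv ne ctx by (auto simp: mems)
      next
        case v7
        have fv: "f v = ln V E x0 z1" using v7 fT7 by blast
        show False using u5 v7 m[of "y1"] fu fv ne ctx by (auto simp: mems)
      qed
    next
      case u6
      have fu: "f u = ln V E x0 y1" using u6 fT6 by blast
      consider (v0) "v = x0" | (v1) "v \<in> X" "v \<noteq> x0" | (v4) "v \<in> Y" "v \<noteq> y1" | (v5) "v \<in> Z" "v \<noteq> z1" | (v6) "v = y1" | (v7) "v = z1"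
        using types[OF v] by blast
      then show False
      proof cases
        case v0
        have fv: "f v = ln V E y1 z1" using v0 fT0 by blast
        show False using u6 v0 m[of "x0"] fu fv ne ctx by (auto simp: mems)
      next
        case v1
        have fv: "f v = ln V E x0 v" using v1 fT1 by blast
        show False using u6 v1 m[of "z1"] fu fv ne ctx by (auto simp: mems)
      next
        case v4
        have fv: "f v = ln V E v y1" using v4 fT4 by blast
        show False using u6 v4 m[of "z1"] fu fv ne ctx by (auto simp: mems)
      next
        case v5
        have fv: "f v = ln V E v z1" using v5 fT5 by blast
        show False using u6 v5 m[of "z1"] fu fv ne ctx by (auto simp: mems)
      next
        case v6
        have fv: "f v = ln V E x0 y1" using v6 fT6 by blast
        then show False using u6 v6 ne by simp
      next
        case v7
        have fv: "f v = ln V E x0 z1" using v7 fT7 by blast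
        show False using u6 v7 m[of "y1"] fu fv ne ctx by (auto simp: mems)
      qed
    next
      case u7
      have fu: "f u = ln V E x0 z1" using u7 fT7 by blast
      consider (v0) "v = x0" | (v1) "v \<in> X" "v \<noteq> x0" | (v4) "v \<in> Y" "v \<noteq> y1" | (v5) "v \<in> Z" "v \<noteq> z1" | (v6) "v = y1" | (v7) "v = z1"
        using types[OF v] by blast
      then show False
      proof cases
        case v0
        have fv: "f v = ln V E y1 z1" using v0 fT0 by blast
        show False using u7 v0 m[of "x0"] fu fv ne ctx by (auto simp: mems)
      next
        case v1
        have fv: "f v = ln V E x0 v" using v1 fT1 by blast
        show False using u7 v1 m[of "y1"] fu fv ne ctx by (auto simp: mems)
      next
        case v4
        have fv: "f v = ln V E v y1" using v4 fT4 by blast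
        show False using u7 v4 m[of "y1"] fu fv ne ctx by (auto simp: mems)
      next
        case v5
        have fv: "f v = ln V E v z1" using v5 fT5 by blast
        show False using u7 v5 m[of "y1"] fu fv ne ctx by (auto simp: mems)
      next
        case v6
        have fv: "f v = ln V E x0 y1" using v6 fT6 by blast
        show False using u7 v6 m[of "y1"] fu fv ne ctx by (auto simp: mems)
      next
        case v7
        have fv: "f v = ln V E x0 z1" using v7 fT7 by blast
        then show False using u7 v7 ne by simp
      qed
    qed
  qed
  have img: "f ` V \<subseteq> lines V (dd V E)"
  proof
    fix L assume "L \<in> f ` V"
    then obtain w where w: "w \<in> V" "L = f w" by blast
    have yz: "y1 \<noteq> z1" using y1 z1 dYZ by blast
    from types[OF w(1)] show "L \<in> lines V (dd V E)"
      using w ctx yz fT0 fT1 fT4 fT5 fT6 fT7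
      by (elim disjE) (auto intro!: lnI)
  qed
  show ?thesis using card_inj_on_le[OF inj img fin_lines] .
qed

end

theorem proposition1:
  fixes V :: "'a set" and E :: "'a \<Rightarrow> 'a \<Rightarrow> bool" and X Y Z :: "'a set"
  assumes "simple_graph V E"
    and "connected_graph V E"
    and "X \<noteq> {}" and "Y \<noteq> {}" and "Z \<noteq> {}"
    and "X \<union> Y \<union> Z = V"
    and "X \<inter> Y = {}" and "X \<inter> Z = {}" and "Y \<inter> Z = {}"
    and "stable_set E X" and "stable_set E Y" and "stable_set E Z"
    and "\<forall>y\<in>Y. \<forall>z\<in>Z. E y z"
    and "\<forall>x\<in>X. (\<exists>y\<in>Y. E x y) \<and> (\<exists>z\<in>Z. E x z)"
  shows "de_Bruijn_Erdos V (gdist V E)"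
proof -
  interpret bis V E X Y Z
    using assms by (unfold_locales) auto
  show ?thesis
  proof (cases "has_universal_line V (gdist V E)")
    case True then show ?thesis by (simp add: de_Bruijn_Erdos_def)
  next
    case False
    have nouni: "ln V E a b \<noteq> V" if "a \<in> V" "b \<in> V" "a \<noteq> b" for a b
    proof
      assume "ln V E a b = V"
      then have "line V (gdist V E) a b = V" using line_gd that by simp
      moreover have "line V (gdist V E) a b \<in> lines V (gdist V E)"
        unfolding lines_def using that by blast
      ultimately show False using False unfolding has_universal_line_def by blast
    qed
    have "card V \<le> card (lines V (dd V E))"
    proof (cases "\<exists>x0\<in>X. \<exists>zo\<in>Z. \<not> E x0 zo")
      case True
      then obtain x0 zo where "x0 \<in> X" "zo \<in> Z" "\<not> E x0 zo" by blast
      then show ?thesis using main1 nouni by blast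
    next
      case F2: False
      show ?thesis
      proof (cases "\<exists>x0\<in>X. \<exists>yo\<in>Y. \<not> E x0 yo")
        case True
        then obtain x0 yo where "x0 \<in> X" "yo \<in> Y" "\<not> E x0 yo" by blast
        then show ?thesis using bis.main1[OF swap] nouni by blast
      next
        case False
        then have "\<And>x w. x \<in> X \<Longrightarrow> w \<in> Y \<or> w \<in> Z \<Longrightarrow> E x w" using F2 by blast
        then show ?thesis using main2 nouni by blast
      qed
    qed
    then show ?thesis using lines_gd by (simp add: de_Bruijn_Erdos_def)
  qed
qed

end
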